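(* Let $G$ be a graph containing no cycle of length 6 and let $x\in V(G)$. Then $x$ is extendable in $G$ if and only if $x$ is extendable in $H_x$.
   Context: All graphs are finite, simple and undirected; "containing no cycle of length 6" means having no subgraph (not necessarily induced) isomorphic to $C_6$. For a vertex set $S$, $N_i(S)$ is the set of vertices at distance exactly $i$ from $S$, $N_i[S]$ the set at distance at most $i$, $N(S)=N_1(S)$, $N[S]=N_1[S]$, and $N(v)=N(\{v\})$ etc.; $S$ dominates $T$ if $T\subseteq N[S]$. A vertex $v$ of a graph $H$ is extendable in $H$ if there is no independent set $S\subseteq N_2(v)$ (distances computed in $H$) dominating $N(v)$ (in $H$). Let $A^*$ be the set of connected components $A$ of $G[N_2(x)]$ for which there exists a vertex $a\in V(A)$ with $N(x)\cap N(a)=N(x)\cap N(V(A))$, and let $V(A^* )$ be the union of their vertex sets. Define $H_x=G[N_2[x]\setminus N[V(A^* )]]$ (neighbourhoods taken in $G$). *)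

theory Defs
  imports Main
begin

text \<open>A graph is given by a vertex set V and an edge relation E. Notions "in the induced
subgraph G[W]" are obtained by replacing V by W (all notions only use vertices of V).\<close>

definition graph :: "'a set \<Rightarrow> ('a \<Rightarrow> 'a \<Rightarrow> bool) \<Rightarrow> bool" where
  "graph V E \<longleftrightarrow> finite V \<and> (\<forall>u v. E u v \<longrightarrow> E v u) \<and> (\<forall>u. \<not> E u u)
     \<and> (\<forall>u v. E u v \<longrightarrow> u \<in> V \<and> v \<in> V)"

definition c6_free :: "'a set \<Rightarrow> ('a \<Rightarrow> 'a \<Rightarrow> bool) \<Rightarrow> bool" where
  "c6_free V E \<longleftrightarrow> \<not> (\<exists>f :: nat \<Rightarrow> 'a. inj_on f {..<6} \<and> f ` {..<6} \<subseteq> V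
      \<and> (\<forall>i<6. E (f i) (f ((i + 1) mod 6))))"

inductive walk :: "'a set \<Rightarrow> ('a \<Rightarrow> 'a \<Rightarrow> bool) \<Rightarrow> 'a \<Rightarrow> 'a \<Rightarrow> nat \<Rightarrow> bool"
  for V E where
  walk0: "u \<in> V \<Longrightarrow> walk V E u u 0"
| walkS: "u \<in> V \<Longrightarrow> E u w \<Longrightarrow> walk V E w v n \<Longrightarrow> walk V E u v (Suc n)"

definition ball :: "'a set \<Rightarrow> ('a \<Rightarrow> 'a \<Rightarrow> bool) \<Rightarrow> nat \<Rightarrow> 'a set \<Rightarrow> 'a set" where
  "ball V E k S = {v \<in> V. \<exists>s\<in>S. \<exists>n\<le>k. walk V E s v n}"

fun sphere :: "'a set \<Rightarrow> ('a \<Rightarrow> 'a \<Rightarrow> bool) \<Rightarrow> nat \<Rightarrow> 'a set \<Rightarrow> 'a set" where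
  "sphere V E 0 S = ball V E 0 S"
| "sphere V E (Suc k) S = ball V E (Suc k) S - ball V E k S"

abbreviation nbhd :: "'a set \<Rightarrow> ('a \<Rightarrow> 'a \<Rightarrow> bool) \<Rightarrow> 'a set \<Rightarrow> 'a set" where
  "nbhd V E S \<equiv> sphere V E 1 S"

definition independent :: "('a \<Rightarrow> 'a \<Rightarrow> bool) \<Rightarrow> 'a set \<Rightarrow> bool" where
  "independent E S \<longleftrightarrow> (\<forall>u\<in>S. \<forall>w\<in>S. \<not> E u w)"

definition dominates :: "'a set \<Rightarrow> ('a \<Rightarrow> 'a \<Rightarrow> bool) \<Rightarrow> 'a set \<Rightarrow> 'a set \<Rightarrow> bool" where
  "dominates V E S T \<longleftrightarrow> T \<subseteq> ball V E 1 S"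

definition extendable :: "'a set \<Rightarrow> ('a \<Rightarrow> 'a \<Rightarrow> bool) \<Rightarrow> 'a \<Rightarrow> bool" where
  "extendable V E v \<longleftrightarrow> \<not> (\<exists>S. S \<subseteq> sphere V E 2 {v} \<and> independent E S
       \<and> dominates V E S (nbhd V E {v}))"

definition components :: "'a set \<Rightarrow> ('a \<Rightarrow> 'a \<Rightarrow> bool) \<Rightarrow> 'a set set" where
  "components V E = {{b \<in> V. \<exists>n. walk V E a b n} | a. a \<in> V}"

text \<open>V(A*): union of components A of G[N_2(x)] having a vertex a with
  N(x) \<inter> N(a) = N(x) \<inter> N(V(A)) (neighbourhoods in G).\<close>
definition Astar :: "'a set \<Rightarrow> ('a \<Rightarrow> 'a \<Rightarrow> bool) \<Rightarrow> 'a \<Rightarrow> 'a set" where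
  "Astar V E x = \<Union>{A \<in> components (sphere V E 2 {x}) E.
      \<exists>a\<in>A. nbhd V E {x} \<inter> nbhd V E {a} = nbhd V E {x} \<inter> nbhd V E A}"

text \<open>Vertex set of H_x = G[N_2[x] - N[V(A*)]].\<close>
definition Hx :: "'a set \<Rightarrow> ('a \<Rightarrow> 'a \<Rightarrow> bool) \<Rightarrow> 'a \<Rightarrow> 'a set" where
  "Hx V E x = ball V E 2 {x} - ball V E 1 (Astar V E x)"

end

theory Submission imports Defs begin

lemma walk0_iff: "walk V E u v 0 \<longleftrightarrow> u = v \<and> u \<in> V"
  by (auto elim: walk.cases intro: walk0)
lemma walkS_iff: "walk V E u v (Suc n) \<longleftrightarrow> u \<in> V \<and> (\<exists>w. E u w \<and> walk V E w v n)"
  by (auto elim: walk.cases intro: walkS)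

lemma le1: "(n::nat) \<le> 1 \<longleftrightarrow> n = 0 \<or> n = Suc 0" by auto
lemma le2: "(n::nat) \<le> 2 \<longleftrightarrow> n = 0 \<or> n = Suc 0 \<or> n = Suc (Suc 0)" by auto

lemma ball0: "ball V E 0 S = S \<inter> V"
  unfolding ball_def by (auto simp: walk0_iff)
lemma ex_le1: "(\<exists>n::nat. n \<le> 1 \<and> P n) \<longleftrightarrow> P 0 \<or> P (Suc 0)"
  using le1 by auto
lemma ex_le2: "(\<exists>n::nat. n \<le> 2 \<and> P n) \<longleftrightarrow> P 0 \<or> P (Suc 0) \<or> P (Suc (Suc 0))"
  using le2 by auto
lemma ball1: "ball V E 1 S = {v\<in>V. \<exists>s\<in>S. s\<in>V \<and> (s=v \<or> E s v)}"
  unfolding ball_def ex_le1 by (auto simp: walk0_iff walkS_iff)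
lemma ball2: "ball V E 2 S = {v\<in>V. \<exists>s\<in>S. s\<in>V \<and> (s=v \<or> E s v \<or> (\<exists>w\<in>V. E s w \<and> E w v))}"
  unfolding ball_def ex_le2 by (auto simp: walk0_iff walkS_iff)

lemma sph1: "sphere V E 1 S = ball V E 1 S - ball V E 0 S"
  by (metis One_nat_def sphere.simps(2))
lemma sph2: "sphere V E 2 S = ball V E 2 S - ball V E 1 S"
  by (metis One_nat_def numeral_2_eq_2 sphere.simps(2))

lemma walk_snoc: assumes "walk V E u v n" "E v w" "w \<in> V" shows "walk V E u w (Suc n)"
  using assms by (induction u v n rule: walk.induct) (auto intro: walk.intros)

lemma walk_rev: assumes s: "\<forall>a b. E a b \<longrightarrow> E b a" and w: "walk V E u v n" shows "walk V E v u n"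
  using w by (induction u v n rule: walk.induct) (auto intro: walk.intros walk_snoc simp: s)

lemma walk_app: "walk V E u v n \<Longrightarrow> walk V E v w m \<Longrightarrow> walk V E u w (n+m)"
  by (induction rule: walk.induct) (auto intro: walk.intros)

lemma walk_in: "walk V E u v n \<Longrightarrow> u \<in> V \<and> v \<in> V"
  by (induction rule: walk.induct) auto

lemma comp_sub: "A \<in> components W E \<Longrightarrow> A \<subseteq> W"
  unfolding components_def by auto

lemma comp_closed: "A \<in> components W E \<Longrightarrow> c \<in> A \<Longrightarrow> d \<in> W \<Longrightarrow> E c d \<Longrightarrow> d \<in> A"
  unfolding components_def by (auto intro: walk_snoc)

lemma comp_eq_aux: assumes s: "\<forall>a b. E a b \<longrightarrow> E b a" and w: "walk W E r c n"
  shows "{b \<in> W. \<exists>n. walk W E r b n} = {b \<in> W. \<exists>n. walk W E c b n}"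
proof -
  have "walk W E c r n" using walk_rev[OF s w] .
  then show ?thesis using w by (auto intro: walk_app)
qed

lemma comp_eq: assumes s: "\<forall>a b. E a b \<longrightarrow> E b a"
  and "A \<in> components W E" "B \<in> components W E" "c \<in> A" "c \<in> B" shows "A = B"
proof -
  obtain r where r: "r \<in> W" "A = {b \<in> W. \<exists>n. walk W E r b n}" using assms(2) unfolding components_def by auto
  obtain r' where r': "r' \<in> W" "B = {b \<in> W. \<exists>n. walk W E r' b n}" using assms(3) unfolding components_def by auto
  obtain n where "walk W E r c n" using r assms(4) by auto
  then have 1: "A = {b \<in> W. \<exists>n. walk W E c b n}" using r comp_eq_aux[OF s] by blast
  obtain m where "walk W E r' c m" using r' assms(5) by auto
  then have "B = {b \<in> W. \<exists>n. walk W E c b n}" using r' comp_eq_aux[OF s] by blast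
  then show ?thesis using 1 by simp
qed

lemma ball1_mono: "V' \<subseteq> V \<Longrightarrow> S \<subseteq> S' \<Longrightarrow> ball V' E 1 S \<subseteq> ball V E 1 S'"
  unfolding ball1 by blast

theorem lemma2p8:
  fixes V :: "'a set" and E :: "'a \<Rightarrow> 'a \<Rightarrow> bool" and x :: 'a
  assumes "graph V E" and "c6_free V E" and "x \<in> V"
  shows "extendable V E x \<longleftrightarrow> extendable (Hx V E x) E x"
proof -
  have sym: "\<forall>a b. E a b \<longrightarrow> E b a" and irr: "\<And>u. \<not> E u u"
    and inV: "\<And>u v. E u v \<Longrightarrow> u \<in> V \<and> v \<in> V"
    using assms(1) unfolding graph_def by auto
  define V' where "V' = Hx V E x"
  define N2 where "N2 = sphere V E 2 {x}"
  define C where "C = {A \<in> components N2 E.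
      \<exists>a\<in>A. nbhd V E {x} \<inter> nbhd V E {a} = nbhd V E {x} \<inter> nbhd V E A}"
  define As where "As = Astar V E x"
  have AsC: "As = \<Union>C" unfolding As_def C_def Astar_def N2_def by simp
  have N2c: "N2 = {v\<in>V. v \<noteq> x \<and> \<not> E x v \<and> (\<exists>w\<in>V. E x w \<and> E w v)}"
    unfolding N2_def sph2 ball1 ball2 using assms(3) by auto
  have N1c: "nbhd V E {x} = {v\<in>V. E x v}"
    unfolding sph1 ball1 ball0 using assms(3) irr by auto
  have CN2: "A \<in> C \<Longrightarrow> A \<subseteq> N2" for A unfolding C_def using comp_sub by blast
  have AsN2: "As \<subseteq> N2" using AsC CN2 by blast
  have closed: "s \<in> N2 \<Longrightarrow> c \<in> As \<Longrightarrow> E c s \<Longrightarrow> s \<in> As" for s c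
  proof -
    assume a: "s \<in> N2" "c \<in> As" "E c s"
    then obtain A where A: "A \<in> C" "c \<in> A" using AsC by blast
    then have "A \<in> components N2 E" unfolding C_def by blast
    then have "s \<in> A" using comp_closed A a by metis
    then show "s \<in> As" using A AsC by blast
  qed
  have V'c: "V' = {v\<in>V. (v = x \<or> E x v \<or> (\<exists>w\<in>V. E x w \<and> E w v)) \<and> v \<notin> As \<and> \<not>(\<exists>s\<in>As. E s v)}"
    unfolding V'_def Hx_def As_def[symmetric] ball1 ball2 using assms(3) AsN2 N2c
    by auto
  have xV': "x \<in> V'" unfolding V'c using assms(3) AsN2 N2c sym by auto
  have N1'c: "nbhd V' E {x} = {v\<in>V'. E x v}"
    unfolding sph1 ball1 ball0 using xV' irr by auto
  have N2'c: "sphere V' E 2 {x} = {v\<in>V'. v \<noteq> x \<and> \<not> E x v \<and> (\<exists>w\<in>V'. E x w \<and> E w v)}"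
    unfolding sph2 ball1 ball2 using xV' by auto
  have V'V: "V' \<subseteq> V" unfolding V'c by auto
  have N2'N2: "sphere V' E 2 {x} \<subseteq> N2" unfolding N2'c N2c using V'V by auto
  show ?thesis
  proof
    assume ext: "extendable V E x"
    show "extendable (Hx V E x) E x"
      unfolding extendable_def V'_def[symmetric]
    proof
      assume "\<exists>S. S \<subseteq> sphere V' E 2 {x} \<and> independent E S \<and> dominates V' E S (nbhd V' E {x})"
      then obtain S where S: "S \<subseteq> sphere V' E 2 {x}" "independent E S"
        "nbhd V' E {x} \<subseteq> ball V' E 1 S" unfolding dominates_def by blast
      define f where "f A = (SOME a. a \<in> A \<and> nbhd V E {x} \<inter> nbhd V E {a} = nbhd V E {x} \<inter> nbhd V E A)" for A
      have f: "A \<in> C \<Longrightarrow> f A \<in> A \<and> nbhd V E {x} \<inter> nbhd V E {f A} = nbhd V E {x} \<inter> nbhd V E A" for A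
        unfolding f_def C_def by (rule someI_ex) blast
      define T where "T = S \<union> f ` C"
      have TAs: "f ` C \<subseteq> As" using f AsC by blast
      have T1: "T \<subseteq> N2" unfolding T_def
        by (rule Un_least[OF subset_trans[OF S(1) N2'N2] subset_trans[OF TAs AsN2]])
      have T2: "independent E T" unfolding independent_def
      proof (intro ballI)
        fix u w assume u: "u \<in> T" and w: "w \<in> T"
        show "\<not> E u w"
        proof
          assume e: "E u w"
          have SAs: "\<not> E s t \<and> \<not> E t s" if st: "s \<in> S" "t \<in> As" for s t
          proof -
            have "s \<in> V'" using st S(1) unfolding N2'c by blast
            then have "\<not> E t s" using st(2) unfolding V'c by blast
            then show ?thesis using sym by blast
          qed
          consider "u \<in> S" "w \<in> S" | "u \<in> S" "w \<in> f ` C" | "u \<in> f ` C" "w \<in> S"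
            | "u \<in> f ` C" "w \<in> f ` C" using u w T_def by blast
          then show False
          proof cases
            case 1 then show ?thesis using S(2) e unfolding independent_def by blast
          next
            case 2 then show ?thesis using SAs TAs e by blast
          next
            case 3 then show ?thesis using SAs TAs e by blast
          next
            case 4
            then obtain A B where A: "A \<in> C" "u = f A" and B: "B \<in> C" "w = f B" by blast
            have "w \<in> A" using comp_closed[of A N2 E u w] A B f CN2 e unfolding C_def by blast
            then have "A = B" using comp_eq[OF sym, of A N2 B w] A B f unfolding C_def by blast
            then show False using A B e irr by simp
          qed
        qed
      qed
      have T3: "nbhd V E {x} \<subseteq> ball V E 1 T"
      proof
        fix v assume v: "v \<in> nbhd V E {x}"
        then have vV: "v \<in> V" and xv: "E x v" unfolding N1c by auto
        show "v \<in> ball V E 1 T"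
        proof (cases "\<exists>c\<in>As. E c v")
          case True
          then obtain c A where c: "c \<in> A" "A \<in> C" "E c v" using AsC by blast
          have "v \<notin> N2" using xv unfolding N2c by blast
          then have "v \<notin> A" using CN2 c by blast
          have "v \<in> nbhd V E A" unfolding sph1 ball1 ball0 using vV c \<open>v \<notin> A\<close> CN2 N2c by blast
          then have "v \<in> nbhd V E {f A}" using f[OF c(2)] v by blast
          then have "v \<in> ball V E 1 {f A}" unfolding sph1 by blast
          moreover have "{f A} \<subseteq> T" unfolding T_def using c by blast
          ultimately show ?thesis using ball1_mono[of V V "{f A}" T E] by blast
        next
          case False
          have "v \<notin> As" using AsN2 xv N2c by blast
          then have "v \<in> V'" unfolding V'c using vV xv False by blast
          then have "v \<in> nbhd V' E {x}" unfolding N1'c using xv by blast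
          then have "v \<in> ball V' E 1 S" using S(3) by blast
          then show ?thesis using ball1_mono[OF V'V, of S T E] T_def by blast
        qed
      qed
      show False using ext T1 T2 T3 unfolding extendable_def dominates_def N2_def by blast
    qed
  next
    assume ext: "extendable (Hx V E x) E x"
    show "extendable V E x"
      unfolding extendable_def
    proof
      assume "\<exists>S. S \<subseteq> sphere V E 2 {x} \<and> independent E S \<and> dominates V E S (nbhd V E {x})"
      then obtain S where S: "S \<subseteq> N2" "independent E S"
        "nbhd V E {x} \<subseteq> ball V E 1 S" unfolding dominates_def N2_def by blast
      define S' where "S' = S \<inter> sphere V' E 2 {x}"
      have T2: "independent E S'" using S(2) unfolding S'_def independent_def by blast
      have T3: "nbhd V' E {x} \<subseteq> ball V' E 1 S'"
      proof
        fix v assume "v \<in> nbhd V' E {x}"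
        then have vV': "v \<in> V'" and xv: "E x v" unfolding N1'c by auto
        then have "v \<in> nbhd V E {x}" unfolding N1c using V'V by blast
        then obtain s where s: "s \<in> S" "s = v \<or> E s v" using S(3) unfolding ball1 by blast
        have sN2: "s \<in> N2" using s S(1) by blast
        have "s \<noteq> v" using sN2 xv N2c by blast
        then have sv: "E s v" using s by blast
        have vnA: "v \<notin> As \<and> \<not>(\<exists>c\<in>As. E c v)" using vV' unfolding V'c by blast
        have "s \<notin> As" using vnA sv by blast
        moreover have "\<not>(\<exists>c\<in>As. E c s)" using closed sN2 \<open>s \<notin> As\<close> by blast
        moreover have "s \<in> V" using sN2 N2c by blast
        moreover have "E v s" using sv sym by blast
        moreover have "v \<in> V" using vV' V'V by blast
        ultimately have "s \<in> V'" unfolding V'c using xv by blast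
        moreover have "s \<noteq> x" "\<not> E x s" using sN2 unfolding N2c by blast+
        ultimately have "s \<in> sphere V' E 2 {x}" unfolding N2'c using vV' xv \<open>E v s\<close> by blast
        then have "s \<in> S'" using s S'_def by blast
        then show "v \<in> ball V' E 1 S'" unfolding ball1 using vV' sv \<open>s \<in> V'\<close> by blast
      qed
      show False using ext T2 T3 unfolding extendable_def dominates_def V'_def[symmetric] S'_def
        by blast
    qed
  qed
qed

end
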